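(* Let $G$, $H$, $H'$ be termgraphs over a signature $\Omega$ and let $\gamma:|G|\to|H|$, $\gamma':|G|\to|H'|$, $\eta:|H|\to|H'|$ be functions such that $\gamma'=\eta\circ\gamma$. Let $\Gamma$ be a set of nodes of $G$. If $\gamma$ is strictly graphic on $\Gamma$ and $\gamma'$ is graphic on $\Gamma$, then $\eta$ is graphic on $\gamma(\Gamma)$.
   Context: A signature $\Omega$ is a set of operation symbols, each $\omega\in\Omega$ with an arity $\mathrm{ar}(\omega)\in\mathbb{N}$. For a set $X$, $X^*$ is the set of strings over $X$, and for $f:X\to Y$, $f^*:X^*\to Y^*$ is $f^*(x_1\ldots x_n)=f(x_1)\ldots f(x_n)$. A termgraph (graph) $G=(\mathcal{N}_G,\mathcal{D}_G,\mathcal{L}_G,\mathcal{S}_G)$ consists of a set of nodes $\mathcal{N}_G$ (written $|G|$), a subset $\mathcal{D}_G\subseteq\mathcal{N}_G$ of labeled nodes, a labeling function $\mathcal{L}_G:\mathcal{D}_G\to\Omega$ and a successor function $\mathcal{S}_G:\mathcal{D}_G\to\mathcal{N}_G^*$ such that for each labeled node $n$ the length of $\mathcal{S}_G(n)$ equals $\mathrm{ar}(\mathcal{L}_G(n))$; nodes not in $\mathcal{D}_G$ are unlabeled. For graphs $G,H$, a function $\gamma:|G|\to|H|$ and a node $n$ of $G$: $\gamma$ is graphic at $n$ if either $n$ is unlabeled, or both $n$ and $\gamma(n)$ are labeled with $\mathcal{L}_H(\gamma(n))=\mathcal{L}_G(n)$ and $\mathcal{S}_H(\gamma(n))=\gamma^*(\mathcal{S}_G(n))$.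 $\gamma$ is strictly graphic at $n$ if either both $n$ and $\gamma(n)$ are unlabeled, or both are labeled with $\mathcal{L}_H(\gamma(n))=\mathcal{L}_G(n)$ and $\mathcal{S}_H(\gamma(n))=\gamma^*(\mathcal{S}_G(n))$. For a set $\Gamma$ of nodes of $G$, $\gamma$ is (strictly) graphic on $\Gamma$ if it is (strictly) graphic at every node of $\Gamma$. *)

theory Defs
  imports Main
begin

text \<open>Label and successor
functions are total HOL functions but only meaningful on labeled nodes.\<close>

record ('n, 'f) termgraph =
  nodes :: "'n set"
  dnodes :: "'n set"
  lab :: "'n \<Rightarrow> 'f"
  succ :: "'n \<Rightarrow> 'n list"

definition termgraph :: "('f \<Rightarrow> nat) \<Rightarrow> ('n, 'f) termgraph \<Rightarrow> bool" where
  "termgraph ar G \<longleftrightarrow> dnodes G \<subseteq> nodes G \<and>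
     (\<forall>n \<in> dnodes G. set (succ G n) \<subseteq> nodes G \<and> length (succ G n) = ar (lab G n))"

definition graphic_at ::
  "('n, 'f) termgraph \<Rightarrow> ('m, 'f) termgraph \<Rightarrow> ('n \<Rightarrow> 'm) \<Rightarrow> 'n \<Rightarrow> bool" where
  "graphic_at G H \<gamma> n \<longleftrightarrow> n \<notin> dnodes G \<or>
     (n \<in> dnodes G \<and> \<gamma> n \<in> dnodes H \<and> lab H (\<gamma> n) = lab G n \<and>
      succ H (\<gamma> n) = map \<gamma> (succ G n))"

definition strictly_graphic_at ::
  "('n, 'f) termgraph \<Rightarrow> ('m, 'f) termgraph \<Rightarrow> ('n \<Rightarrow> 'm) \<Rightarrow> 'n \<Rightarrow> bool" where
  "strictly_graphic_at G H \<gamma> n \<longleftrightarrow> (n \<notin> dnodes G \<and> \<gamma> n \<notin> dnodes H) \<or>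
     (n \<in> dnodes G \<and> \<gamma> n \<in> dnodes H \<and> lab H (\<gamma> n) = lab G n \<and>
      succ H (\<gamma> n) = map \<gamma> (succ G n))"

definition graphic_on ::
  "('n, 'f) termgraph \<Rightarrow> ('m, 'f) termgraph \<Rightarrow> ('n \<Rightarrow> 'm) \<Rightarrow> 'n set \<Rightarrow> bool" where
  "graphic_on G H \<gamma> \<Gamma> \<longleftrightarrow> (\<forall>n \<in> \<Gamma>. graphic_at G H \<gamma> n)"

definition strictly_graphic_on ::
  "('n, 'f) termgraph \<Rightarrow> ('m, 'f) termgraph \<Rightarrow> ('n \<Rightarrow> 'm) \<Rightarrow> 'n set \<Rightarrow> bool" where
  "strictly_graphic_on G H \<gamma> \<Gamma> \<longleftrightarrow> (\<forall>n \<in> \<Gamma>. strictly_graphic_at G H \<gamma> n)"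

end

theory Submission
  imports Defs
begin

theorem lemma1:
  fixes ar :: "'f \<Rightarrow> nat"
    and G :: "('a, 'f) termgraph" and H :: "('b, 'f) termgraph" and H' :: "('c, 'f) termgraph"
    and \<gamma> :: "'a \<Rightarrow> 'b" and \<gamma>' :: "'a \<Rightarrow> 'c" and \<eta> :: "'b \<Rightarrow> 'c"
    and \<Gamma> :: "'a set"
  assumes "termgraph ar G" and "termgraph ar H" and "termgraph ar H'"
    and "\<gamma> ` nodes G \<subseteq> nodes H" and "\<gamma>' ` nodes G \<subseteq> nodes H'" and "\<eta> ` nodes H \<subseteq> nodes H'"
    and "\<forall>x \<in> nodes G. \<gamma>' x = \<eta> (\<gamma> x)"
    and "\<Gamma> \<subseteq> nodes G"
    and "strictly_graphic_on G H \<gamma> \<Gamma>"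
    and "graphic_on G H' \<gamma>' \<Gamma>"
  shows "graphic_on H H' \<eta> (\<gamma> ` \<Gamma>)"
  unfolding graphic_on_def
proof
  fix m assume "m \<in> \<gamma> ` \<Gamma>"
  then obtain n where n: "n \<in> \<Gamma>" "m = \<gamma> n" by blast
  have nG: "n \<in> nodes G" using n assms(8) by blast
  have s: "strictly_graphic_at G H \<gamma> n" using assms(9) n unfolding strictly_graphic_on_def by blast
  have g: "graphic_at G H' \<gamma>' n" using assms(10) n unfolding graphic_on_def by blast
  show "graphic_at H H' \<eta> m"
  proof (cases "n \<in> dnodes G")
    case False thus ?thesis using s n unfolding strictly_graphic_at_def graphic_at_def by auto
  next
    case True
    have sub: "set (succ G n) \<subseteq> nodes G" using assms(1) True unfolding termgraph_def by blast
    have "map \<gamma>' (succ G n) = map \<eta> (map \<gamma> (succ G n))" using sub assms(7) by (auto intro!: map_cong)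
    thus ?thesis using True s g n nG assms(7) unfolding strictly_graphic_at_def graphic_at_def by auto
  qed
qed

end
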